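(* For any $\alpha>0$, integers $n,m$ with $m>n$, $n$ dividing $m$ and $m/n>2$, and $k$ with $n\le k\le m$, there exists a full rank matrix $X\in\mathbb{R}^{n\times m}$ such that for every subset $\mathcal S\subseteq[m]$ of cardinality $k$ with $\mathrm{rank}(X_{\mathcal S})=n$, $$\|X_{\mathcal S}^{\dagger}\|_F^2\ge\Big(\frac{m-k}{k+\alpha^2}+1-\frac{k}{n}\Big)\|X^{\dagger}\|_F^2 .$$
   Context: $[m]=\{1,\dots,m\}$; $X_{\mathcal S}$ is the submatrix of columns of $X$ indexed by $\mathcal S$; $A^\dagger$ is the Moore–Penrose pseudo-inverse; $\|\cdot\|_F$ is the Frobenius norm. *)

theory Defs
  imports "Jordan_Normal_Form.DL_Rank" "Jordan_Normal_Form.DL_Submatrix"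
begin

definition pinv :: "real mat \<Rightarrow> real mat" where
  "pinv A = (THE B. B \<in> carrier_mat (dim_col A) (dim_row A) \<and>
       A * B * A = A \<and> B * A * B = B \<and>
       transpose_mat (A * B) = A * B \<and> transpose_mat (B * A) = B * A)"

definition fro_norm :: "real mat \<Rightarrow> real" where
  "fro_norm A = sqrt (\<Sum>i<dim_row A. \<Sum>j<dim_col A. (A $$ (i,j))^2)"

text \<open>Column submatrix X_S (columns indexed by S, 0-based, in increasing order).\<close>
definition col_sub :: "real mat \<Rightarrow> nat set \<Rightarrow> real mat" where
  "col_sub X S = submatrix X {0..<dim_row X} S"

end

theory Submission
  imports Defs
begin

definition penrose :: "real mat \<Rightarrow> real mat \<Rightarrow> bool" where
  "penrose A B \<longleftrightarrow> A * B * A = A \<and> B * A * B = B \<and>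
       transpose_mat (A * B) = A * B \<and> transpose_mat (B * A) = B * A"

lemma mp_unique:
  fixes A B C :: "real mat"
  assumes A: "A \<in> carrier_mat n k" and B: "B \<in> carrier_mat k n" and C: "C \<in> carrier_mat k n"
    and pB: "penrose A B" and pC: "penrose A C"
  shows "B = C"
proof -
  have 1: "A * B * A = A" "B * A * B = B" "transpose_mat (A * B) = A * B" "transpose_mat (B * A) = B * A"
    using pB unfolding penrose_def by auto
  have 2: "A * C * A = A" "C * A * C = C" "transpose_mat (A * C) = A * C" "transpose_mat (C * A) = C * A"
    using pC unfolding penrose_def by auto
  have At_c: "transpose_mat A \<in> carrier_mat k n" and Bt_c: "transpose_mat B \<in> carrier_mat n k"
    and Ct_c: "transpose_mat C \<in> carrier_mat n k" using A B C by auto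
  have AC: "A * C \<in> carrier_mat n n" and BA: "B * A \<in> carrier_mat k k" and CA: "C * A \<in> carrier_mat k k"
    and AB: "A * B \<in> carrier_mat n n" using A B C by auto
  have At: "transpose_mat A = transpose_mat A * (A * C)"
  proof -
    have "transpose_mat A = transpose_mat ((A * C) * A)" using 2 by simp
    also have "\<dots> = transpose_mat A * transpose_mat (A * C)"
      by (rule transpose_mult[OF AC A])
    finally show ?thesis using 2 by simp
  qed
  have At2: "transpose_mat A = (B * A) * transpose_mat A"
  proof -
    have "transpose_mat A = transpose_mat (A * (B * A))" using 1 assoc_mult_mat[OF A B A] by simp
    also have "\<dots> = transpose_mat (B * A) * transpose_mat A"
      by (rule transpose_mult[OF A BA])
    finally show ?thesis using 1 by simp
  qed
  have "B = B * (A * B)" using 1 assoc_mult_mat[OF B A B] by simp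
  also have "\<dots> = B * (transpose_mat B * transpose_mat A)" using 1 transpose_mult[OF A B] by simp
  also have "\<dots> = B * (transpose_mat B * (transpose_mat A * (A * C)))" using At by simp
  also have "\<dots> = B * ((transpose_mat B * transpose_mat A) * (A * C))"
    using assoc_mult_mat[OF Bt_c At_c AC] by simp
  also have "\<dots> = B * ((A * B) * (A * C))" using 1 transpose_mult[OF A B] by simp
  also have "\<dots> = B * (A * (B * (A * C)))" using assoc_mult_mat[OF A B AC] by simp
  also have "\<dots> = (B * A) * (B * (A * C))" using assoc_mult_mat[OF B A, of "B * (A * C)" n] B AC by simp
  also have "\<dots> = ((B * A) * B) * (A * C)" using assoc_mult_mat[OF BA B AC] by simp
  also have "\<dots> = B * A * C" using 1 assoc_mult_mat[OF B A C] by simp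
  finally have eB: "B = B * A * C" .
  have "C = (C * A) * C" using 2 by simp
  also have "\<dots> = (transpose_mat A * transpose_mat C) * C"
    using 2 transpose_mult[OF C A] by simp
  also have "\<dots> = (((B * A) * transpose_mat A) * transpose_mat C) * C" using At2 by simp
  also have "\<dots> = ((B * A) * (transpose_mat A * transpose_mat C)) * C"
    using assoc_mult_mat[OF BA At_c Ct_c] by simp
  also have "\<dots> = ((B * A) * (C * A)) * C"
    using 2 transpose_mult[OF C A] by simp
  also have "\<dots> = (B * A) * ((C * A) * C)" using assoc_mult_mat[OF BA CA C] by simp
  also have "\<dots> = B * A * C" using 2 by simp
  finally show ?thesis using eB by simp
qed

definition cnt :: "nat \<Rightarrow> (nat \<Rightarrow> nat) \<Rightarrow> nat \<Rightarrow> nat" where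
  "cnt k \<sigma> i = card {j. j < k \<and> \<sigma> j = i}"

definition selm :: "nat \<Rightarrow> nat \<Rightarrow> (nat \<Rightarrow> nat) \<Rightarrow> real mat" where
  "selm n k \<sigma> = mat n k (\<lambda>(i,j). if \<sigma> j = i then 1 else 0)"

definition selp :: "nat \<Rightarrow> nat \<Rightarrow> (nat \<Rightarrow> nat) \<Rightarrow> real mat" where
  "selp n k \<sigma> = mat k n (\<lambda>(j,i). if \<sigma> j = i then 1 / real (cnt k \<sigma> i) else 0)"

lemma sum_ind: "(\<Sum>j<k. if \<sigma> j = i then a else 0) = real (cnt k \<sigma> i) * (a::real)"
proof -
  have "(\<Sum>j<k. if \<sigma> j = i then a else 0) = (\<Sum>j\<in>{j. j < k \<and> \<sigma> j = i}. a)"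
    by (rule sum.mono_neutral_cong_right) auto
  then show ?thesis by (simp add: cnt_def)
qed

lemma ite01: "(if P then (a::real) else 0) * (if Q then b else 0) = (if P \<and> Q then a * b else 0)" by auto

lemma cnt_pos: "j < k \<Longrightarrow> cnt k \<sigma> (\<sigma> j) > 0"
  unfolding cnt_def by (subst card_gt_0_iff) auto

lemma selm_carrier[simp]: "selm n k \<sigma> \<in> carrier_mat n k" by (simp add: selm_def)
lemma selp_carrier[simp]: "selp n k \<sigma> \<in> carrier_mat k n" by (simp add: selp_def)

lemma selAB: "selm n k \<sigma> * selp n k \<sigma> = mat n n (\<lambda>(i,i'). if i = i' \<and> cnt k \<sigma> i > 0 then 1 else 0)"
proof (rule eq_matI)
  fix i i' assume i: "i < dim_row (mat n n (\<lambda>(i,i'). if i = i' \<and> cnt k \<sigma> i > 0 then 1 else (0::real)))"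
    and i': "i' < dim_col (mat n n (\<lambda>(i,i'). if i = i' \<and> cnt k \<sigma> i > 0 then 1 else (0::real)))"
  have "(selm n k \<sigma> * selp n k \<sigma>) $$ (i,i') =
    (\<Sum>j<k. if \<sigma> j = i then (if i = i' then 1 / real (cnt k \<sigma> i) else 0) else 0)"
    using i i' by (auto simp: selm_def selp_def scalar_prod_def lessThan_atLeast0 intro!: sum.cong)
  also have "\<dots> = real (cnt k \<sigma> i) * (if i = i' then 1 / real (cnt k \<sigma> i) else 0)"
    by (rule sum_ind)
  finally show "(selm n k \<sigma> * selp n k \<sigma>) $$ (i,i') = mat n n (\<lambda>(i,i'). if i = i' \<and> cnt k \<sigma> i > 0 then 1 else 0) $$ (i,i')"
    using i i' by auto
qed (auto simp: selm_def selp_def)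

lemma selBA:
  assumes "\<forall>j<k. \<sigma> j < n"
  shows "selp n k \<sigma> * selm n k \<sigma> = mat k k (\<lambda>(j,j'). if \<sigma> j = \<sigma> j' then 1 / real (cnt k \<sigma> (\<sigma> j)) else 0)"
proof (rule eq_matI)
  fix j j' assume j: "j < dim_row (mat k k (\<lambda>(j,j'). if \<sigma> j = \<sigma> j' then 1 / real (cnt k \<sigma> (\<sigma> j)) else (0::real)))"
    and j': "j' < dim_col (mat k k (\<lambda>(j,j'). if \<sigma> j = \<sigma> j' then 1 / real (cnt k \<sigma> (\<sigma> j)) else (0::real)))"
  have "(selp n k \<sigma> * selm n k \<sigma>) $$ (j,j') =
    (\<Sum>i<n. if \<sigma> j = i then (if \<sigma> j' = i then 1 / real (cnt k \<sigma> i) else 0) else 0)"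
    using j j' by (simp add: selm_def selp_def scalar_prod_def lessThan_atLeast0 ite01)
  also have "\<dots> = (if \<sigma> j' = \<sigma> j then 1 / real (cnt k \<sigma> (\<sigma> j)) else 0)"
    using assms j by (subst sum.delta') auto
  finally show "(selp n k \<sigma> * selm n k \<sigma>) $$ (j,j') = mat k k (\<lambda>(j,j'). if \<sigma> j = \<sigma> j' then 1 / real (cnt k \<sigma> (\<sigma> j)) else 0) $$ (j,j')"
    using j j' by auto
qed (auto simp: selm_def selp_def)

lemma sel_penrose:
  assumes "\<forall>j<k. \<sigma> j < n"
  shows "penrose (selm n k \<sigma>) (selp n k \<sigma>)"
  unfolding penrose_def
proof (intro conjI)
  show "selm n k \<sigma> * selp n k \<sigma> * selm n k \<sigma> = selm n k \<sigma>"
    unfolding selAB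
  proof (rule eq_matI)
    fix i j assume i: "i < dim_row (selm n k \<sigma>)" and j: "j < dim_col (selm n k \<sigma>)"
    have "(mat n n (\<lambda>(i, i'). if i = i' \<and> 0 < cnt k \<sigma> i then 1 else 0) * selm n k \<sigma>) $$ (i, j)
       = (\<Sum>i'<n. if i' = i then (if 0 < cnt k \<sigma> i \<and> \<sigma> j = i then 1 else 0) else (0::real))"
      using i j by (simp add: selm_def scalar_prod_def lessThan_atLeast0 ite01)
    also have "\<dots> = selm n k \<sigma> $$ (i,j)"
      using i j cnt_pos[of j k \<sigma>] by (auto simp: selm_def)
    finally show "(mat n n (\<lambda>(i, i'). if i = i' \<and> 0 < cnt k \<sigma> i then 1 else 0) * selm n k \<sigma>) $$ (i, j) = selm n k \<sigma> $$ (i,j)" .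
  qed (auto simp: selm_def)
  show "selp n k \<sigma> * selm n k \<sigma> * selp n k \<sigma> = selp n k \<sigma>"
    unfolding selBA[OF assms]
  proof (rule eq_matI)
    fix j i assume j: "j < dim_row (selp n k \<sigma>)" and i: "i < dim_col (selp n k \<sigma>)"
    have "(mat k k (\<lambda>(j, j'). if \<sigma> j = \<sigma> j' then 1 / real (cnt k \<sigma> (\<sigma> j)) else 0) * selp n k \<sigma>) $$ (j, i)
       = (\<Sum>j'<k. if \<sigma> j' = i then (if \<sigma> j = i then 1 / real (cnt k \<sigma> i) ^ 2 else 0) else (0::real))"
      using i j by (auto simp: selp_def scalar_prod_def lessThan_atLeast0 power2_eq_square intro!: sum.cong)
    also have "\<dots> = real (cnt k \<sigma> i) * (if \<sigma> j = i then 1 / real (cnt k \<sigma> i) ^ 2 else 0)"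
      by (rule sum_ind)
    also have "\<dots> = selp n k \<sigma> $$ (j,i)"
      using i j cnt_pos[of j k \<sigma>] by (auto simp: selp_def power2_eq_square)
    finally show "(mat k k (\<lambda>(j, j'). if \<sigma> j = \<sigma> j' then 1 / real (cnt k \<sigma> (\<sigma> j)) else 0) * selp n k \<sigma>) $$ (j, i) = selp n k \<sigma> $$ (j,i)" .
  qed (auto simp: selp_def)
  show "transpose_mat (selm n k \<sigma> * selp n k \<sigma>) = selm n k \<sigma> * selp n k \<sigma>"
    unfolding selAB by (rule eq_matI) auto
  show "transpose_mat (selp n k \<sigma> * selm n k \<sigma>) = selp n k \<sigma> * selm n k \<sigma>"
    unfolding selBA[OF assms] by (rule eq_matI) auto
qed

lemma pinv_sel:
  assumes "\<forall>j<k. \<sigma> j < n"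
  shows "pinv (selm n k \<sigma>) = selp n k \<sigma>"
proof -
  have d: "dim_col (selm n k \<sigma>) = k" "dim_row (selm n k \<sigma>) = n" by (auto simp: selm_def)
  show ?thesis unfolding pinv_def d
  proof (rule the_equality)
    show "selp n k \<sigma> \<in> carrier_mat k n \<and> selm n k \<sigma> * selp n k \<sigma> * selm n k \<sigma> = selm n k \<sigma> \<and>
      selp n k \<sigma> * selm n k \<sigma> * selp n k \<sigma> = selp n k \<sigma> \<and>
      transpose_mat (selm n k \<sigma> * selp n k \<sigma>) = selm n k \<sigma> * selp n k \<sigma> \<and>
      transpose_mat (selp n k \<sigma> * selm n k \<sigma>) = selp n k \<sigma> * selm n k \<sigma>"
      using sel_penrose[OF assms] unfolding penrose_def by auto
  next
    fix B assume "B \<in> carrier_mat k n \<and> selm n k \<sigma> * B * selm n k \<sigma> = selm n k \<sigma> \<and>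
      B * selm n k \<sigma> * B = B \<and> transpose_mat (selm n k \<sigma> * B) = selm n k \<sigma> * B \<and>
      transpose_mat (B * selm n k \<sigma>) = B * selm n k \<sigma>"
    then show "B = selp n k \<sigma>"
      using mp_unique[of "selm n k \<sigma>" n k B "selp n k \<sigma>"] sel_penrose[OF assms]
      unfolding penrose_def by auto
  qed
qed

lemma fro_sel:
  assumes "\<forall>j<k. \<sigma> j < n"
  shows "(fro_norm (selp n k \<sigma>))^2 = (\<Sum>j<k. (1 / real (cnt k \<sigma> (\<sigma> j)))^2)"
proof -
  have "(fro_norm (selp n k \<sigma>))^2 = (\<Sum>j<k. \<Sum>i<n. (if \<sigma> j = i then 1 / real (cnt k \<sigma> i) else 0)^2)"
    unfolding fro_norm_def by (subst real_sqrt_pow2) (auto simp: selp_def intro!: sum_nonneg)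
  also have "\<dots> = (\<Sum>j<k. (1 / real (cnt k \<sigma> (\<sigma> j)))^2)"
  proof (rule sum.cong)
    fix j assume "j \<in> {..<k}"
    then have "(\<Sum>i<n. (if \<sigma> j = i then 1 / real (cnt k \<sigma> i) else 0)^2) =
        (\<Sum>i<n. if \<sigma> j = i then (1 / real (cnt k \<sigma> i))^2 else 0)"
      by (intro sum.cong) auto
    also have "\<dots> = (1 / real (cnt k \<sigma> (\<sigma> j)))^2" using assms \<open>j \<in> {..<k}\<close> by (subst sum.delta') auto
    finally show "(\<Sum>i<n. (if \<sigma> j = i then 1 / real (cnt k \<sigma> i) else 0)^2) = (1 / real (cnt k \<sigma> (\<sigma> j)))^2" .
  qed simp
  finally show ?thesis .
qed

lemma cs_sum:
  fixes f :: "nat \<Rightarrow> real"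
  shows "(\<Sum>j<k. f j)^2 \<le> real k * (\<Sum>j<k. (f j)^2)"
proof -
  define s where "s = (\<Sum>j<k. f j)"
  have "0 \<le> (\<Sum>j<k. (real k * f j - s)^2)" by (intro sum_nonneg) auto
  also have "\<dots> = (\<Sum>j<k. (real k)^2 * (f j)^2 - 2 * real k * s * f j + s^2)"
    by (intro sum.cong) (auto simp: power2_diff power_mult_distrib algebra_simps)
  also have "\<dots> = (real k)^2 * (\<Sum>j<k. (f j)^2) - 2 * real k * s * s + real k * s^2"
    by (simp add: sum.distrib sum_subtractf sum_distrib_left s_def)
  also have "\<dots> = real k * (real k * (\<Sum>j<k. (f j)^2) - s^2)"
    by (simp add: algebra_simps power2_eq_square)
  finally have nn: "0 \<le> real k * (real k * (\<Sum>j<k. (f j)^2) - s^2)" .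
  then show ?thesis
  proof (cases "k = 0")
    case True then show ?thesis by simp
  next
    case False then show ?thesis using nn unfolding s_def
      by (simp add: zero_le_mult_iff)
  qed
qed

lemma (in vec_space) rank_le_card_cols:
assumes "A \<in> carrier_mat n nc"
shows "rank A \<le> card (set (cols A))"
proof -
  obtain S where "maximal S (\<lambda>T. T \<subseteq> set (cols A) \<and> lin_indpt T)"
    using maximal_exists[of "(\<lambda>T. T \<subseteq> set (cols A) \<and> lin_indpt T)" "card (set (cols A))" "{}"]
    by (meson List.finite_set card_mono empty_iff empty_subsetI finite_lin_indpt2 rev_finite_subset)
  then have "card S \<le> card (set (cols A))" by (simp add: card_mono maximal_def)
  then show ?thesis
    using rank_card_indpt[OF assms \<open>maximal S (\<lambda>T. T \<subseteq> set (cols A) \<and> lin_indpt T)\<close>]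
    by simp
qed

lemma cols_sel:
  assumes "\<forall>j<k. \<sigma> j < n"
  shows "set (cols (selm n k \<sigma>)) = (\<lambda>j. unit_vec n (\<sigma> j)) ` {..<k}"
proof -
  have "\<And>j. j < k \<Longrightarrow> col (selm n k \<sigma>) j = unit_vec n (\<sigma> j)"
    using assms by (intro eq_vecI) (auto simp: selm_def unit_vec_def)
  then show ?thesis unfolding cols_def by (auto simp: selm_def)
qed

lemma rank_sel_le:
  assumes "\<forall>j<k. \<sigma> j < n"
  shows "vec_space.rank n (selm n k \<sigma>) \<le> card (\<sigma> ` {..<k})"
proof -
  interpret vec_space "TYPE(real)" n .
  have "rank (selm n k \<sigma>) \<le> card (set (cols (selm n k \<sigma>)))"
    by (rule rank_le_card_cols[OF selm_carrier])
  also have "\<dots> = card ((unit_vec n :: nat \<Rightarrow> real vec) ` \<sigma> ` {..<k})" unfolding cols_sel[OF assms] by (simp add: image_image)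
  also have "\<dots> \<le> card (\<sigma> ` {..<k})" by (rule card_image_le) auto
  finally show ?thesis .
qed

lemma rank_X:
  assumes "0 < n" "n \<le> m"
  shows "vec_space.rank n (selm n m (\<lambda>j. j mod n)) = n"
proof -
  interpret vec_space "TYPE(real)" n .
  have "rank (selm n m (\<lambda>j. j mod n)) \<le> card ((\<lambda>j. j mod n) ` {..<m})"
    using rank_sel_le[of m "\<lambda>j. j mod n" n] assms by auto
  also have "\<dots> \<le> card {..<n}" by (rule card_mono) (auto simp: assms)
  finally have le: "rank (selm n m (\<lambda>j. j mod n)) \<le> n" by simp
  have sub: "set (unit_vecs n :: real vec list) \<subseteq> set (cols (selm n m (\<lambda>j. j mod n)))"
  proof -
    have "set (cols (selm n m (\<lambda>j. j mod n))) = (\<lambda>j. unit_vec n (j mod n)) ` {..<m}"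
      by (rule cols_sel) (auto simp: assms)
    moreover have "set (unit_vecs n :: real vec list) \<subseteq> (\<lambda>j. unit_vec n (j mod n)) ` {..<m}"
    proof
      fix v :: "real vec" assume "v \<in> set (unit_vecs n)"
      then obtain i where i: "i < n" "v = unit_vec n i" unfolding unit_vecs_def by auto
      then have "v = unit_vec n (i mod n)" "i \<in> {..<m}" using assms by auto
      then show "v \<in> (\<lambda>j. unit_vec n (j mod n)) ` {..<m}" by blast
    qed
    ultimately show ?thesis by simp
  qed
  have li: "lin_indpt (set (unit_vecs n :: real vec list))" using unit_vecs_basis unfolding basis_def by blast
  have "card (set (unit_vecs n :: real vec list)) \<le> rank (selm n m (\<lambda>j. j mod n))"
    by (rule rank_ge_card_indpt[OF selm_carrier sub li])
  moreover have "card (set (unit_vecs n :: real vec list)) = n"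
    using distinct_card[OF unit_vecs_distinct] by simp
  ultimately show ?thesis using le by simp
qed

lemma pick_interval: "i < n \<Longrightarrow> pick {0..<n} i = i"
proof -
  assume i: "i < n"
  have e: "{a. a < n \<and> a \<in> (UNIV::nat set)} = {0..<n}" by auto
  have "pick UNIV i = pick {a. a < n \<and> a \<in> (UNIV::nat set)} i"
    by (rule pick_reduce_set) (simp add: e i)
  then show ?thesis using e pick_UNIV by simp
qed

lemma col_sub_X:
  assumes S: "S \<subseteq> {0..<m}" and k: "card S = k" and n: "0 < n"
  shows "col_sub (selm n m (\<lambda>j. j mod n)) S = selm n k (\<lambda>j. pick S j mod n)"
proof -
  have c1: "card {i. i < n \<and> i \<in> {0..<n}} = n" by simp
  have e2: "{j. j < m \<and> j \<in> S} = S" using S by auto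
  have fin: "finite S" using S finite_subset by blast
  show ?thesis
    unfolding col_sub_def submatrix_def
  proof (rule eq_matI)
    fix i j assume "i < dim_row (selm n k (\<lambda>j. pick S j mod n))" "j < dim_col (selm n k (\<lambda>j. pick S j mod n))"
    then have i: "i < n" and j: "j < k" by (auto simp: selm_def)
    have p: "pick S j \<in> S" using j k by (intro pick_in_set) simp
    then have "pick S j < m" using S by auto
    then show "mat (card {i. i < dim_row (selm n m (\<lambda>j. j mod n)) \<and> i \<in> {0..<dim_row (selm n m (\<lambda>j. j mod n))}})
          (card {j. j < dim_col (selm n m (\<lambda>j. j mod n)) \<and> j \<in> S})
          (\<lambda>(i, j). selm n m (\<lambda>j. j mod n) $$ (pick {0..<dim_row (selm n m (\<lambda>j. j mod n))} i, pick S j)) $$ (i, j) =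
         selm n k (\<lambda>j. pick S j mod n) $$ (i, j)"
      using i j e2 k pick_interval[OF i] by (simp add: selm_def)
  qed (use e2 k in \<open>auto simp: selm_def\<close>)
qed

lemma cnt_X:
  assumes n: "0 < n" and d: "n dvd m" and i: "i < n"
  shows "cnt m (\<lambda>j. j mod n) i = m div n"
proof -
  have "{j. j < m \<and> j mod n = i} = (\<lambda>t. t * n + i) ` {..<m div n}"
  proof (rule equalityI; rule subsetI)
    fix j assume j: "j \<in> {j. j < m \<and> j mod n = i}"
    then have jm: "j < m" and ji: "j mod n = i" by auto
    have "j = (j div n) * n + i" using div_mult_mod_eq[of j n] ji by simp
    moreover have "j div n < m div n"
    proof (rule ccontr)
      assume "\<not> j div n < m div n"
      then have "(m div n) * n \<le> (j div n) * n" by (intro mult_right_mono) auto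
      also have "\<dots> \<le> j" using div_mult_mod_eq[of j n] by linarith
      finally show False using jm d by simp
    qed
    ultimately show "j \<in> (\<lambda>t. t * n + i) ` {..<m div n}" by blast
  next
    fix j assume "j \<in> (\<lambda>t. t * n + i) ` {..<m div n}"
    then obtain t where t: "t < m div n" "j = t * n + i" by auto
    have "t * n + i < (t + 1) * n" using i by simp
    also have "\<dots> \<le> (m div n) * n" using t by (intro mult_right_mono) auto
    also have "\<dots> = m" using d by simp
    finally show "j \<in> {j. j < m \<and> j mod n = i}" using t i by simp
  qed
  moreover have "inj_on (\<lambda>t. t * n + i) {..<m div n}" using n by (intro inj_onI) simp
  ultimately show ?thesis unfolding cnt_def by (simp add: card_image)
qed

lemma sum_inv_cnt:
  assumes "\<forall>j<k. \<sigma> j < n" and surj: "\<sigma> ` {..<k} = {..<n}"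
  shows "(\<Sum>j<k. 1 / real (cnt k \<sigma> (\<sigma> j))) = real n"
proof -
  have "(\<Sum>j<k. 1 / real (cnt k \<sigma> (\<sigma> j))) = (\<Sum>j<k. \<Sum>i<n. if \<sigma> j = i then 1 / real (cnt k \<sigma> i) else 0)"
    using assms(1) by (intro sum.cong refl) (subst sum.delta', auto)
  also have "\<dots> = (\<Sum>i<n. \<Sum>j<k. if \<sigma> j = i then 1 / real (cnt k \<sigma> i) else 0)"
    by (rule sum.swap)
  also have "\<dots> = (\<Sum>i<n. real (cnt k \<sigma> i) * (1 / real (cnt k \<sigma> i)))"
    by (intro sum.cong refl sum_ind)
  also have "\<dots> = (\<Sum>i<n. 1)"
  proof (intro sum.cong refl)
    fix i assume "i \<in> {..<n}"
    then obtain j where "j < k" "i = \<sigma> j" using surj by (metis imageE lessThan_iff)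
    then have "cnt k \<sigma> i > 0" using cnt_pos by blast
    then show "real (cnt k \<sigma> i) * (1 / real (cnt k \<sigma> i)) = 1" by simp
  qed
  finally show ?thesis by simp
qed

theorem theorem4p5:
  fixes \<alpha> :: real and n m k :: nat
  assumes "\<alpha> > 0" and "m > n" and "n dvd m" and "real m / real n > 2"
    and "n \<le> k" and "k \<le> m"
  shows "\<exists>X :: real mat. X \<in> carrier_mat n m \<and> vec_space.rank n X = n \<and>
    (\<forall>S. S \<subseteq> {0..<m} \<and> card S = k \<and> vec_space.rank n (col_sub X S) = n \<longrightarrow>
       (fro_norm (pinv (col_sub X S)))^2 \<ge>
         ((real m - real k) / (real k + \<alpha>^2) + 1 - real k / real n) * (fro_norm (pinv X))^2)"
proof -
  have n: "0 < n" using assms(4) by (cases "n = 0") auto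
  have k0: "0 < k" using n assms(5) by simp
  define q where "q = m div n"
  have mq: "m = q * n" using assms(3) unfolding q_def by simp
  have q0: "0 < q" using mq assms(2) n by (cases "q = 0") auto
  define X where "X = selm n m (\<lambda>j. j mod n)"
  have sX: "\<forall>j<m. j mod n < n" using n by simp
  have FX: "(fro_norm (pinv X))^2 = real n ^ 2 / real m"
  proof -
    have "(fro_norm (pinv X))^2 = (\<Sum>j<m. (1 / real q)^2)"
      unfolding X_def pinv_sel[OF sX] fro_sel[OF sX]
      using cnt_X[OF n assms(3)] n unfolding q_def by (intro sum.cong refl) auto
    also have "\<dots> = real n ^ 2 / real m" using mq q0 n by (simp add: power2_eq_square field_simps)
    finally show ?thesis .
  qed
  have coef: "(real m - real k) / (real k + \<alpha>^2) + 1 - real k / real n \<le> real m / real k"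
  proof -
    have "(real m - real k) / (real k + \<alpha>^2) \<le> (real m - real k) / real k"
      using assms(6) k0 by (intro divide_left_mono) (auto intro!: mult_pos_pos add_pos_nonneg)
    also have "\<dots> = real m / real k - 1" using k0 by (simp add: field_simps)
    finally have a: "(real m - real k) / (real k + \<alpha>^2) \<le> real m / real k - 1" .
    have "real n \<le> real k" using assms(5) by simp
    then have "1 \<le> real k / real n" using n by simp
    with a show ?thesis by linarith
  qed
  show ?thesis
  proof (intro exI conjI allI impI)
    show "X \<in> carrier_mat n m" unfolding X_def by simp
    show "vec_space.rank n X = n" unfolding X_def using rank_X n assms(2) by simp
    fix S assume S: "S \<subseteq> {0..<m} \<and> card S = k \<and> vec_space.rank n (col_sub X S) = n"
    define \<sigma> where "\<sigma> = (\<lambda>j. pick S j mod n)"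
    have cs: "col_sub X S = selm n k \<sigma>" unfolding X_def \<sigma>_def using S n col_sub_X by blast
    have s\<sigma>: "\<forall>j<k. \<sigma> j < n" using n unfolding \<sigma>_def by simp
    have "n \<le> card (\<sigma> ` {..<k})" using rank_sel_le[OF s\<sigma>] S cs by simp
    moreover have sub: "\<sigma> ` {..<k} \<subseteq> {..<n}" using s\<sigma> by auto
    ultimately have surj: "\<sigma> ` {..<k} = {..<n}"
      by (metis card_lessThan card_seteq finite_lessThan)
    have FS: "(fro_norm (pinv (col_sub X S)))^2 = (\<Sum>j<k. (1 / real (cnt k \<sigma> (\<sigma> j)))^2)"
      unfolding cs pinv_sel[OF s\<sigma>] fro_sel[OF s\<sigma>] ..
    have "(real n)^2 \<le> real k * (\<Sum>j<k. (1 / real (cnt k \<sigma> (\<sigma> j)))^2)"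
      using cs_sum[of "\<lambda>j. 1 / real (cnt k \<sigma> (\<sigma> j))" k] sum_inv_cnt[OF s\<sigma> surj] by simp
    then have low: "real n ^ 2 / real k \<le> (fro_norm (pinv (col_sub X S)))^2"
      unfolding FS using k0 by (simp add: divide_le_eq mult.commute)
    have F0: "0 \<le> real n ^ 2 / real m" by simp
    have "((real m - real k) / (real k + \<alpha>^2) + 1 - real k / real n) * (real n ^ 2 / real m)
        \<le> (real m / real k) * (real n ^ 2 / real m)"
      by (rule mult_right_mono[OF coef F0])
    also have "\<dots> = real n ^ 2 / real k" using assms(2) by (simp add: field_simps)
    finally show "((real m - real k) / (real k + \<alpha>^2) + 1 - real k / real n) * (fro_norm (pinv X))^2
        \<le> (fro_norm (pinv (col_sub X S)))^2" unfolding FX using low by linarith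
  qed
qed

end
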